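(* Let $n>s\ge1$ be integers, let $t_0,\dots,t_s,t$ be independent indeterminates, $g(x)=\sum_{k=0}^s t_kx^k$ and $f(t;x)=x^n+t\,g(x)$. Let $B=(b_{ij})_{1\le i,j\le s}=M_s(g,g')$ and put $l_k=n-s+k+2$. Then $M_n(f(t;x),f'(t;x))=(\hat a_{ij}(t)+\tilde a_{ij}(t))_{1\le i,j\le n}$, where $$\hat a_{ij}(t)=\begin{cases} n & (i,j)=(1,1),\\ (s-k)t_{s-k}t & (i,j)=(1,l_k-1)\text{ or }(l_k-1,1),\ 0\le k\le s-1,\\ -(l_k-2)t_{s-k}t & i+j=l_k,\ 2\le i,j\le l_k-2,\ 0\le k\le s,\\ 0&\text{otherwise},\end{cases}$$ $$\tilde a_{ij}(t)=\begin{cases} b_{i-(n-s),\,j-(n-s)}\,t^2 & n-s+1\le i,j\le n,\\ 0&\text{otherwise}.\end{cases}$$ Here derivatives are with respect to $x$.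
   Context: Bezoutian: for polynomials $f_1,f_2$ over a field $F$ of characteristic $0$ and an integer $n\ge\max\{\deg f_1,\deg f_2\}$, write $\frac{f_1(x)f_2(y)-f_1(y)f_2(x)}{x-y}=\sum_{i,j=1}^n\alpha_{ij}x^{n-i}y^{n-j}\in F[x,y]$ and set $M_n(f_1,f_2)=(\alpha_{ij})_{1\le i,j\le n}$. Here $F=\mathbb{R}(t_0,\dots,t_s,t)$. *)

theory Defs
  imports "HOL-Computational_Algebra.Polynomial"
begin

text \<open>Bivariate polynomials in x, y are represented as ''a poly poly'':
  the outer variable is x, the coefficients are polynomials in y.\<close>

definition poly_in_x :: "'a::comm_ring_1 poly \<Rightarrow> 'a poly poly" where
  "poly_in_x f = map_poly (\<lambda>c. [:c:]) f"

definition poly_in_y :: "'a::comm_ring_1 poly \<Rightarrow> 'a poly poly" where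
  "poly_in_y f = [:f:]"

definition bezout_poly :: "'a::field poly \<Rightarrow> 'a poly \<Rightarrow> 'a poly poly" where
  "bezout_poly f1 f2 =
     (poly_in_x f1 * poly_in_y f2 - poly_in_y f1 * poly_in_x f2)
       div (poly_in_x [:0, 1:] - poly_in_y [:0, 1:])"

text \<open>Bezoutian M_n(f1,f2) = (alpha_ij), 1 <= i,j <= n, where alpha_ij is the coefficient
  of x^(n-i) y^(n-j).  Entries are meaningful for 1 <= i,j <= n.\<close>
definition bezout_matrix :: "nat \<Rightarrow> 'a::field poly \<Rightarrow> 'a poly \<Rightarrow> nat \<Rightarrow> nat \<Rightarrow> 'a" where
  "bezout_matrix n f1 f2 i j = coeff (coeff (bezout_poly f1 f2) (n - i)) (n - j)"

end

theory Submission
  imports Defs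
begin


definition TT :: "nat \<Rightarrow> nat \<Rightarrow> 'a::comm_ring_1 poly poly" where
  "TT u v = monom (monom 1 v) u"

lemma coeff_TT: "coeff (coeff (TT u v) P) Q = (if P = u then if Q = v then 1 else 0 else 0)"
  by (simp add: TT_def)

lemma TT_mult: "TT u v * TT u' v' = TT (u+u') (v+v')"
  by (simp add: TT_def mult_monom)

lemma mult_if_0: "(c::'a::mult_zero) * (if P then x else 0) = (if P then c*x else 0)"
  by simp

lemma if_if_0: "(if A then if B then x else 0 else 0) = (if A \<and> B then x else 0)"
  by simp

lemma poly_eq2: "(\<And>k m. coeff (coeff p k) m = coeff (coeff q k) m) \<Longrightarrow> p = q"
  by (rule poly_eqI, rule poly_eqI) auto

lemma XY: "poly_in_x [:0,1:] - poly_in_y [:0,1:] = (TT 1 0 - TT 0 1 :: 'a::comm_ring_1 poly poly)"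
  by (rule poly_eq2) (auto simp: poly_in_x_def poly_in_y_def coeff_TT coeff_map_poly coeff_pCons split: nat.splits)

lemma XY_ne: "(TT 1 0 - TT 0 1 :: 'a::comm_ring_1 poly poly) \<noteq> 0"
proof
  assume "(TT 1 0 - TT 0 1 :: 'a poly poly) = 0"
  then have "coeff (coeff (TT 1 0 - TT 0 1 :: 'a poly poly) 1) 0 = 0" by simp
  then show False by (simp add: coeff_TT)
qed

lemma TT_step: "(TT 1 0 - TT 0 1) * TT u v = TT (Suc u) v - TT u (Suc v)"
  by (simp add: algebra_simps TT_mult)

lemma tele: assumes "b < a"
  shows "(TT 1 0 - TT 0 1) * (\<Sum>p<a-b. TT (b+p) (a - Suc p)) = TT a b - (TT b a :: 'a::comm_ring_1 poly poly)"
proof -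
  define F where "F p = (TT (b+p) (a-p) :: 'a poly poly)" for p
  have "(TT 1 0 - TT 0 1) * (\<Sum>p<a-b. TT (b+p) (a - Suc p)) = (\<Sum>p<a-b. F (Suc p) - F p)"
    unfolding sum_distrib_left
  proof (rule sum.cong)
    fix p assume "p \<in> {..<a-b}"
    then have "Suc (a - Suc p) = a - p" "a - Suc p = a - Suc p" by auto
    then show "(TT 1 0 - TT 0 1) * TT (b + p) (a - Suc p) = F (Suc p) - F p"
      by (simp only: TT_step F_def) (simp add: add.commute)
  qed simp
  also have "\<dots> = F (a-b) - F 0" by (rule sum_lessThan_telescope)
  also have "\<dots> = TT a b - TT b a" using assms by (simp add: F_def)
  finally show ?thesis .
qed

definition EE :: "nat \<Rightarrow> nat \<Rightarrow> 'a::comm_ring_1 poly poly" where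
  "EE a b = (if b < a then (\<Sum>p<a-b. TT (b+p) (a - Suc p))
     else if a < b then - (\<Sum>p<b-a. TT (a+p) (b - Suc p)) else 0)"

lemma EE_prop: "(TT 1 0 - TT 0 1) * EE a b = TT a b - TT b a"
proof -
  consider "b < a" | "a < b" | "a = b" by linarith
  then show ?thesis
  proof cases
    case 1 then show ?thesis using tele[OF 1] by (simp add: EE_def)
  next
    case 2
    then have EEd: "EE a b = - (\<Sum>p<b-a. TT (a+p) (b - Suc p))" by (simp add: EE_def)
    show ?thesis by (simp only: EEd mult_minus_right tele[OF 2]) simp
  qed (simp add: EE_def)
qed

lemma EE_prop': "(TT (Suc 0) 0 - TT 0 (Suc 0)) * EE a b = TT a b - TT b a"
  using EE_prop[of a b] by simp

lemma sum_if_unique: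
  assumes "finite A" "\<And>k. k \<in> A \<Longrightarrow> P k \<longleftrightarrow> k = K \<and> R"
  shows "(\<Sum>k\<in>A. if P k then h k else 0) = (if R \<and> K \<in> A then h K else 0)"
proof -
  have "(\<Sum>k\<in>A. if P k then h k else 0) = (\<Sum>k\<in>A. if k = K then (if R then h k else 0) else 0)"
    by (rule sum.cong) (auto simp: assms(2))
  also have "\<dots> = (if R \<and> K \<in> A then h K else 0)" using assms(1) by (simp add: sum.delta)
  finally show ?thesis .
qed

definition ee :: "nat \<Rightarrow> nat \<Rightarrow> nat \<Rightarrow> nat \<Rightarrow> 'a::comm_ring_1" where
  "ee a b P Q = (if b < a \<and> b \<le> P \<and> b \<le> Q \<and> P + Q + 1 = a + b then 1
     else if a < b \<and> a \<le> P \<and> a \<le> Q \<and> P + Q + 1 = a + b then -1 else 0)"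

lemma coeff_half: assumes "b < a"
  shows "coeff (coeff (\<Sum>p<a-b. TT (b+p) (a - Suc p) :: 'a::comm_ring_1 poly poly) P) Q
     = (if b \<le> P \<and> b \<le> Q \<and> P + Q + 1 = a + b then 1 else 0)"
proof -
  have "coeff (coeff (\<Sum>p<a-b. TT (b+p) (a - Suc p) :: 'a poly poly) P) Q
      = (\<Sum>p<a-b. if P = b + p \<and> Q = a - Suc p then 1 else 0)"
    by (simp add: coeff_sum coeff_TT if_if_0)
  also have "\<dots> = (if (b \<le> P \<and> b \<le> Q \<and> P + Q + 1 = a + b) \<and> P - b \<in> {..<a-b} then 1 else 0)"
    by (rule sum_if_unique) (use assms in auto)
  also have "\<dots> = (if b \<le> P \<and> b \<le> Q \<and> P + Q + 1 = a + b then 1 else 0)"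
    using assms by auto
  finally show ?thesis .
qed

lemma coeff_EE: "coeff (coeff (EE a b) P) Q = ee a b P Q"
  by (auto simp: EE_def ee_def coeff_half)

lemma pix: assumes "\<And>a. N < a \<Longrightarrow> coeff f a = 0"
  shows "poly_in_x f = (\<Sum>a\<le>N. smult [:coeff f a:] (TT a 0))"
  by (rule poly_eq2) (auto simp: poly_in_x_def coeff_map_poly coeff_sum coeff_TT assms mult_if_0 not_le coeff_pCons split: nat.splits)

lemma piy: assumes "\<And>a. N < a \<Longrightarrow> coeff f a = 0"
  shows "poly_in_y f = (\<Sum>a\<le>N. smult [:coeff f a:] (TT 0 a))"
  by (rule poly_eq2) (auto simp: poly_in_y_def coeff_pCons coeff_sum coeff_TT assms mult_if_0 not_le split: nat.splits)

lemma bezout_coeff: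
  fixes f1 f2 :: "'a::field poly"
  assumes "\<And>a. N < a \<Longrightarrow> coeff f1 a = 0" "\<And>a. N < a \<Longrightarrow> coeff f2 a = 0"
  shows "coeff (coeff (bezout_poly f1 f2) P) Q
     = (\<Sum>a\<le>N. \<Sum>b\<le>N. coeff f1 a * coeff f2 b * ee a b P Q)"
proof -
  define \<rho> where "\<rho> = (\<Sum>a\<le>N. \<Sum>b\<le>N. smult [:coeff f1 a * coeff f2 b:] (EE a b :: 'a poly poly))"
  have num: "poly_in_x f1 * poly_in_y f2 - poly_in_y f1 * poly_in_x f2 = (TT 1 0 - TT 0 1) * \<rho>"
  proof -
    have "poly_in_x f1 * poly_in_y f2 - poly_in_y f1 * poly_in_x f2
       = (\<Sum>a\<le>N. \<Sum>b\<le>N. smult [:coeff f1 a * coeff f2 b:] (TT a b - TT b a))"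
      apply (simp only: pix[OF assms(1)] pix[OF assms(2)] piy[OF assms(1)] piy[OF assms(2)])
      apply (simp only: sum_product)
      apply (simp only: sum_subtractf[symmetric])
      apply (rule sum.cong[OF refl])+
      apply (simp add: TT_mult smult_diff_right)
      done
    also have "\<dots> = (TT 1 0 - TT 0 1) * \<rho>"
      unfolding \<rho>_def sum_distrib_left by (simp add: EE_prop')
    finally show ?thesis .
  qed
  have "bezout_poly f1 f2 = \<rho>"
    unfolding bezout_poly_def XY num by (rule nonzero_mult_div_cancel_left[OF XY_ne])
  then show ?thesis by (simp add: \<rho>_def coeff_sum coeff_EE)
qed



lemma ee1:
  assumes "1 \<le> c" "c < n" "i \<le> n" "j \<le> n"
  shows "ee n (c-1) (n-i) (n-j) = (if i + j = n+2-c \<and> i \<le> n+1-c \<and> j \<le> n+1-c then 1 else (0::'a::comm_ring_1))"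
  using assms unfolding ee_def by (auto; arith)

lemma ee2:
  assumes "c < n - 1" "i \<le> n" "j \<le> n"
  shows "ee c (n-1) (n-i) (n-j) = (if i + j = n+2-c \<and> i \<le> n-c \<and> j \<le> n-c then -1 else (0::'a::comm_ring_1))"
  using assms unfolding ee_def by (auto; arith)

lemma ee3: "ee (n-1) (n-1) P Q = 0"
  unfolding ee_def by auto

lemma key:
  fixes i j c n :: nat
  assumes "1 \<le> i" "i \<le> n" "1 \<le> j" "j \<le> n" "c < n" "2 \<le> n"
  shows "of_nat c * ee n (c-1) (n-i) (n-j) + of_nat n * ee c (n-1) (n-i) (n-j)
    = (if 0 < c \<and> ((i = 1 \<and> j = n+1-c) \<or> (i = n+1-c \<and> j = 1)) then of_nat c else 0)
      + (if i + j = n+2-c \<and> 2 \<le> i \<and> i \<le> n-c \<and> 2 \<le> j \<and> j \<le> n-c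
         then - of_nat (n-c) else (0::'a::field_char_0))"
proof -
  consider "c = 0" | "0 < c" "c < n - 1" | "0 < c" "c = n - 1" using assms by linarith
  then show ?thesis
  proof cases
    case 1
    have "ee 0 (n-1) (n-i) (n-j) = (if i + j = n+2-0 \<and> i \<le> n-0 \<and> j \<le> n-0 then -1 else (0::'a))"
      by (rule ee2) (use assms in auto)
    then show ?thesis using assms 1 by simp
  next
    case 2
    have E1: "ee n (c-1) (n-i) (n-j) = (if i + j = n+2-c \<and> i \<le> n+1-c \<and> j \<le> n+1-c then 1 else (0::'a))"
      by (rule ee1) (use assms 2 in auto)
    have E2: "ee c (n-1) (n-i) (n-j) = (if i + j = n+2-c \<and> i \<le> n-c \<and> j \<le> n-c then -1 else (0::'a))"
      by (rule ee2) (use assms 2 in auto)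
    show ?thesis unfolding E1 E2 using assms 2 by (auto simp: of_nat_diff; arith)
  next
    case 3
    have E1: "ee n (c-1) (n-i) (n-j) = (if i + j = n+2-c \<and> i \<le> n+1-c \<and> j \<le> n+1-c then 1 else (0::'a))"
      by (rule ee1) (use assms 3 in auto)
    have E2: "ee c (n-1) (n-i) (n-j) = (0::'a)"
      using ee3[of n "n-i" "n-j"] 3 by simp
    show ?thesis unfolding E1 E2 using assms 3 by (auto simp: of_nat_diff; arith)
  qed
qed


lemma sum_if_cond: "(\<Sum>b\<in>B. if P then f b else 0) = (if P then sum f B else (0::'a::comm_monoid_add))"
  by (cases P) auto

lemma bp_vanish:
  fixes g :: "'a::field poly"
  assumes "\<And>a. s < a \<Longrightarrow> coeff g a = 0" "\<And>a. s < a \<Longrightarrow> coeff h a = 0" "s \<le> P \<or> s \<le> Q"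
  shows "coeff (coeff (bezout_poly g h) P) Q = 0"
proof -
  have "coeff (coeff (bezout_poly g h) P) Q = (\<Sum>a\<le>s. \<Sum>b\<le>s. coeff g a * coeff h b * ee a b P Q)"
    by (rule bezout_coeff) (use assms in auto)
  also have "\<dots> = 0"
    by (rule sum.neutral, rule ballI, rule sum.neutral) (use assms(3) in \<open>auto simp: ee_def\<close>)
  finally show ?thesis .
qed

theorem proposition5p4:
  fixes n s :: nat and ts :: "nat \<Rightarrow> 'a::field_char_0" and t :: 'a
    and g f :: "'a poly" and B :: "nat \<Rightarrow> nat \<Rightarrow> 'a" and l :: "nat \<Rightarrow> nat"
    and ahat atilde :: "nat \<Rightarrow> nat \<Rightarrow> 'a"
  assumes "1 \<le> s" and "s < n"
    and g_def: "g = (\<Sum>k\<le>s. monom (ts k) k)"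
    and f_def: "f = monom 1 n + smult t g"
    and B_def: "B = bezout_matrix s g (pderiv g)"
    and l_def: "\<And>k. l k = n - s + k + 2"
    and ahat_def: "\<And>i j. ahat i j =
        (if i = 1 \<and> j = 1 then of_nat n else 0)
      + (\<Sum>k<s. if (i = 1 \<and> j = l k - 1) \<or> (i = l k - 1 \<and> j = 1)
                 then of_nat (s - k) * ts (s - k) * t else 0)
      + (\<Sum>k\<le>s. if i + j = l k \<and> 2 \<le> i \<and> i \<le> l k - 2 \<and> 2 \<le> j \<and> j \<le> l k - 2
                 then - (of_nat (l k - 2) * ts (s - k) * t) else 0)"
    and atilde_def: "\<And>i j. atilde i j =
        (if n - s + 1 \<le> i \<and> i \<le> n \<and> n - s + 1 \<le> j \<and> j \<le> n
         then B (i - (n - s)) (j - (n - s)) * t ^ 2 else 0)"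
  shows "\<forall>i\<in>{1..n}. \<forall>j\<in>{1..n}. bezout_matrix n f (pderiv f) i j = ahat i j + atilde i j"
proof (intro ballI)
  fix i j assume i: "i \<in> {1..n}" and j: "j \<in> {1..n}"
  define P where "P = n - i"
  define Q where "Q = n - j"
  have n2: "2 \<le> n" using assms(1,2) by linarith
  have cg: "coeff g a = (if a \<le> s then ts a else 0)" for a
    by (simp add: g_def coeff_sum)
  have cf: "coeff f a = (if a = n then 1 else 0) + t * coeff g a" for a
    by (simp add: f_def)
  have gv: "coeff g a = 0" if "s < a" for a using that by (simp add: cg)
  have g'v: "coeff (pderiv g) a = 0" if "s < a" for a using that by (simp add: coeff_pderiv cg)
  have fv: "coeff f a = 0" if "n < a" for a using that assms(2) by (simp add: cf cg)
  have f'v: "coeff (pderiv f) a = 0" if "n < a" for a using that by (simp add: coeff_pderiv fv)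
  have gvn: "coeff g a = 0" if "n < a" for a using that assms(2) by (simp add: cg)
  have g'vn: "coeff (pderiv g) a = 0" if "n < a" for a using that assms(2) by (simp add: g'v)
  define BG where "BG = coeff (coeff (bezout_poly g (pderiv g)) P) Q"
  define S2 where "S2 = (\<Sum>b\<le>n. of_nat (Suc b) * coeff g (Suc b) * ee n b P Q)"
  define S3 where "S3 = (\<Sum>a\<le>n. coeff g a * ee a (n-1) P Q)"
  have entry: "bezout_matrix n f (pderiv f) i j
      = of_nat n * ee n (n-1) P Q + t * S2 + t * (of_nat n * S3) + t^2 * BG"
  proof -
    define A1 where "A1 a b = (if a = n then (if b = n-1 then of_nat n * ee n (n-1) P Q else 0) else (0::'a))" for a b
    define A2 where "A2 a b = t * (if a = n then of_nat (Suc b) * coeff g (Suc b) * ee n b P Q else 0)" for a b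
    define A3 where "A3 a b = t * (if b = n-1 then of_nat n * coeff g a * ee a (n-1) P Q else 0)" for a b
    define A4 where "A4 a b = t^2 * (coeff g a * coeff (pderiv g) b * ee a b P Q)" for a b
    have "bezout_matrix n f (pderiv f) i j = (\<Sum>a\<le>n. \<Sum>b\<le>n. coeff f a * coeff (pderiv f) b * ee a b P Q)"
      unfolding bezout_matrix_def P_def Q_def by (rule bezout_coeff) (use fv f'v in auto)
    also have "\<dots> = (\<Sum>a\<le>n. \<Sum>b\<le>n. A1 a b + A2 a b + A3 a b + A4 a b)"
    proof (intro sum.cong refl)
      fix a b
      show "coeff f a * coeff (pderiv f) b * ee a b P Q = A1 a b + A2 a b + A3 a b + A4 a b"
        using n2 unfolding A1_def A2_def A3_def A4_def
        by (cases "a = n"; cases "Suc b = n") (auto simp: cf coeff_pderiv algebra_simps power2_eq_square)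
    qed
    also have "\<dots> = (\<Sum>a\<le>n. \<Sum>b\<le>n. A1 a b) + (\<Sum>a\<le>n. \<Sum>b\<le>n. A2 a b)
        + (\<Sum>a\<le>n. \<Sum>b\<le>n. A3 a b) + (\<Sum>a\<le>n. \<Sum>b\<le>n. A4 a b)"
      by (simp add: sum.distrib)
    also have "(\<Sum>a\<le>n. \<Sum>b\<le>n. A1 a b) = of_nat n * ee n (n-1) P Q"
      by (simp add: A1_def sum_if_cond)
    also have "(\<Sum>a\<le>n. \<Sum>b\<le>n. A2 a b) = t * S2"
      by (simp add: A2_def S2_def sum_distrib_left[symmetric] sum_if_cond)
    also have "(\<Sum>a\<le>n. \<Sum>b\<le>n. A3 a b) = t * (of_nat n * S3)"
      by (simp add: A3_def S3_def sum_distrib_left[symmetric] mult.assoc)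
    also have "(\<Sum>a\<le>n. \<Sum>b\<le>n. A4 a b) = t^2 * BG"
    proof -
      have "BG = (\<Sum>a\<le>n. \<Sum>b\<le>n. coeff g a * coeff (pderiv g) b * ee a b P Q)"
        unfolding BG_def by (rule bezout_coeff) (use gvn g'vn in auto)
      then show ?thesis by (simp add: A4_def sum_distrib_left)
    qed
    finally show ?thesis .
  qed
  have S2r: "S2 = (\<Sum>c\<le>s. of_nat c * ts c * ee n (c-1) P Q)"
  proof -
    have "S2 = (\<Sum>b<s. of_nat (Suc b) * coeff g (Suc b) * ee n b P Q)"
      unfolding S2_def by (rule sum.mono_neutral_right) (use assms(2) in \<open>auto simp: gv\<close>)
    also have "\<dots> = (\<Sum>b<s. of_nat (Suc b) * ts (Suc b) * ee n (Suc b - 1) P Q)"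
      by (rule sum.cong) (auto simp: cg)
    also have "\<dots> = (\<Sum>c\<le>s. of_nat c * ts c * ee n (c-1) P Q)"
      by (simp only: sum.atMost_shift[of "\<lambda>c. of_nat c * ts c * ee n (c-1) P Q"]) simp
    finally show ?thesis .
  qed
  have S3r: "S3 = (\<Sum>c\<le>s. ts c * ee c (n-1) P Q)"
  proof -
    have "S3 = (\<Sum>a\<le>s. coeff g a * ee a (n-1) P Q)"
      unfolding S3_def by (rule sum.mono_neutral_right) (use assms(2) in \<open>auto simp: gv\<close>)
    also have "\<dots> = (\<Sum>c\<le>s. ts c * ee c (n-1) P Q)"
      by (rule sum.cong) (auto simp: cg)
    finally show ?thesis .
  qed
  define X where "X k = (if (i = 1 \<and> j = l k - 1) \<or> (i = l k - 1 \<and> j = 1)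
                 then of_nat (s - k) * ts (s - k) * t else 0)" for k
  define Y where "Y k = (if i + j = l k \<and> 2 \<le> i \<and> i \<le> l k - 2 \<and> 2 \<le> j \<and> j \<le> l k - 2
                 then - (of_nat (l k - 2) * ts (s - k) * t) else 0)" for k
  define KR where "KR c = (if 0 < c \<and> ((i = 1 \<and> j = n+1-c) \<or> (i = n+1-c \<and> j = 1)) then of_nat c else 0)
      + (if i + j = n+2-c \<and> 2 \<le> i \<and> i \<le> n-c \<and> 2 \<le> j \<and> j \<le> n-c
         then - of_nat (n-c) else (0::'a))" for c
  have mid: "t * S2 + t * (of_nat n * S3) = (\<Sum>k<s. X k) + (\<Sum>k\<le>s. Y k)"
  proof -
    have "t * S2 + t * (of_nat n * S3)
        = (\<Sum>c\<le>s. t * ts c * (of_nat c * ee n (c-1) P Q + of_nat n * ee c (n-1) P Q))"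
      unfolding S2r S3r by (simp add: sum_distrib_left sum.distrib[symmetric] algebra_simps)
    also have "\<dots> = (\<Sum>c\<le>s. t * ts c * KR c)"
    proof (rule sum.cong[OF refl])
      fix c assume "c \<in> {..s}"
      then have "c < n" using assms(2) by auto
      then show "t * ts c * (of_nat c * ee n (c-1) P Q + of_nat n * ee c (n-1) P Q) = t * ts c * KR c"
        unfolding KR_def P_def Q_def using key[of i n j c] i j n2 by auto
    qed
    also have "\<dots> = (\<Sum>k\<le>s. t * ts (s-k) * KR (s-k))"
      using sum.atLeastAtMost_rev[of "\<lambda>c. t * ts c * KR c" 0 s] by (simp add: atLeast0AtMost)
    also have "\<dots> = (\<Sum>k\<le>s. (if k < s then X k else 0) + Y k)"
    proof (rule sum.cong[OF refl])
      fix k assume "k \<in> {..s}"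
      then have ks: "k \<le> s" by auto
      have e1: "n+1-(s-k) = l k - 1" "n+2-(s-k) = l k" "n-(s-k) = l k - 2" "(0 < s-k) = (k < s)"
        unfolding l_def using ks assms(2) by auto
      show "t * ts (s-k) * KR (s-k) = (if k < s then X k else 0) + Y k"
        unfolding KR_def X_def Y_def
        apply (simp only: e1)
        by (auto simp: algebra_simps)
    qed
    also have "\<dots> = (\<Sum>k<s. X k) + (\<Sum>k\<le>s. Y k)"
    proof -
      have "(\<Sum>k\<le>s. (if k < s then X k else 0)) = (\<Sum>k<s. X k)"
        by (rule sum.mono_neutral_cong_right) auto
      then show ?thesis by (simp add: sum.distrib)
    qed
    finally show ?thesis .
  qed
  have first: "ee n (n-1) P Q = (if i = 1 \<and> j = 1 then 1 else (0::'a))"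
    unfolding ee_def P_def Q_def using i j n2 by (auto; arith)
  have tl: "t^2 * BG = atilde i j"
  proof (cases "n - s + 1 \<le> i \<and> i \<le> n \<and> n - s + 1 \<le> j \<and> j \<le> n")
    case True
    then have "s - (i - (n-s)) = P" "s - (j - (n-s)) = Q" unfolding P_def Q_def using assms(2) by auto
    then have "B (i - (n - s)) (j - (n - s)) = BG"
      unfolding B_def BG_def bezout_matrix_def by simp
    then show ?thesis using True atilde_def by simp
  next
    case False
    then have "s \<le> P \<or> s \<le> Q" unfolding P_def Q_def using i j by auto
    then have "BG = 0" unfolding BG_def by (intro bp_vanish) (use gv g'v in auto)
    have "atilde i j = 0" unfolding atilde_def[of i j] by (rule if_not_P[OF False])
    then show ?thesis using \<open>BG = 0\<close> by simp
  qed
  show "bezout_matrix n f (pderiv f) i j = ahat i j + atilde i j"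
  proof -
    have ah: "ahat i j = (if i = 1 \<and> j = 1 then of_nat n else 0) + (\<Sum>k<s. X k) + (\<Sum>k\<le>s. Y k)"
      unfolding X_def Y_def by (rule ahat_def)
    have "bezout_matrix n f (pderiv f) i j
        = of_nat n * ee n (n-1) P Q + (t * S2 + t * (of_nat n * S3)) + t^2 * BG"
      by (simp only: entry add.assoc)
    also have "\<dots> = of_nat n * (if i = 1 \<and> j = 1 then 1 else 0) + ((\<Sum>k<s. X k) + (\<Sum>k\<le>s. Y k)) + atilde i j"
      by (simp only: mid first tl)
    also have "\<dots> = ahat i j + atilde i j"
      unfolding ah by simp
    finally show ?thesis .
  qed
qed

end
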